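(* Let $A\in M_n$. Suppose that for every $c\in\mathbb{R}^n$ the $c$-numerical range $W_c(A)$ is a closed circular disc centered at $0$ (possibly of radius $0$). Then $A$ is nilpotent.
   Context: $M_n$ denotes the space of $n\times n$ complex matrices. For $c=(c_1,\dots,c_n)^t\in\mathbb{R}^n$, the $c$-numerical range of $A\in M_n$ is $W_c(A)=\{\sum_{j=1}^n c_jx_j^*Ax_j:\ x_1,\dots,x_n\in\mathbb{C}^n\text{ orthonormal}\}$. *)

theory Defs
  imports "HOL-Analysis.Analysis"
begin

definition cinner :: "complex ^ 'n \<Rightarrow> complex ^ 'n \<Rightarrow> complex" where
  "cinner x y = (\<Sum>i\<in>UNIV. cnj (x $ i) * y $ i)"

definition orthonormal_family :: "('n \<Rightarrow> complex ^ 'n) \<Rightarrow> bool" where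
  "orthonormal_family x \<longleftrightarrow>
     (\<forall>j k. cinner (x j) (x k) = (if j = k then 1 else 0))"

definition c_numerical_range :: "real ^ 'n \<Rightarrow> complex ^ 'n ^ 'n \<Rightarrow> complex set" where
  "c_numerical_range c A =
     {(\<Sum>j\<in>UNIV. complex_of_real (c $ j) * cinner (x j) (A *v x j)) | x. orthonormal_family x}"

definition matrix_power :: "complex ^ 'n ^ 'n \<Rightarrow> nat \<Rightarrow> complex ^ 'n ^ 'n" where
  "matrix_power A k = (((**) A) ^^ k) (mat 1)"

definition nilpotent_matrix :: "complex ^ 'n ^ 'n \<Rightarrow> bool" where
  "nilpotent_matrix A \<longleftrightarrow> (\<exists>k. matrix_power A k = 0)"

end

theory Submission
  imports Defs "HOL-Computational_Algebra.Fundamental_Theorem_Algebra"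
begin

section \<open>Inner product basics\<close>

lemma cinner_add_right: "cinner x (y + z) = cinner x y + cinner x z"
  by (simp add: cinner_def distrib_left sum.distrib)
lemma cinner_add_left: "cinner (x + y) z = cinner x z + cinner y z"
  by (simp add: cinner_def distrib_right sum.distrib)
lemma cinner_diff_right: "cinner x (y - z) = cinner x y - cinner x z"
  by (simp add: cinner_def right_diff_distrib sum_subtractf)
lemma cinner_diff_left: "cinner (x - y) z = cinner x z - cinner y z"
  by (simp add: cinner_def left_diff_distrib sum_subtractf)
lemma cinner_scale_right: "cinner x (c *s y) = c * cinner x y"
  by (simp add: cinner_def sum_distrib_left algebra_simps)
lemma cinner_scale_left: "cinner (c *s x) y = cnj c * cinner x y"
  by (simp add: cinner_def sum_distrib_left algebra_simps)
lemma cinner_sum_right: "cinner x (sum f S) = (\<Sum>k\<in>S. cinner x (f k))"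
  unfolding cinner_def sum_component by (simp add: sum_distrib_left) (rule sum.swap)
lemma cinner_sum_left: "cinner (sum f S) x = (\<Sum>k\<in>S. cinner (f k) x)"
  unfolding cinner_def sum_component by (simp add: sum_distrib_right) (rule sum.swap)
lemma cinner_zero_right[simp]: "cinner x 0 = 0" by (simp add: cinner_def)
lemma cinner_zero_left[simp]: "cinner 0 x = 0" by (simp add: cinner_def)
lemma cinner_cnj: "cnj (cinner x y) = cinner y x"
  by (simp add: cinner_def mult.commute)

lemma cinner_self: "cinner x x = of_real (\<Sum>i\<in>UNIV. (cmod (x $ i))\<^sup>2)"
  unfolding cinner_def of_real_sum by (intro sum.cong refl) (metis complex_norm_square of_real_power mult.commute)

lemma cinner_self_eq_0: "cinner x x = 0 \<longleftrightarrow> x = 0"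
proof
  assume "cinner x x = 0"
  hence "(\<Sum>i\<in>UNIV. (cmod (x $ i))\<^sup>2) = 0" unfolding cinner_self of_real_eq_0_iff .
  hence "\<forall>i\<in>UNIV. (cmod (x $ i))\<^sup>2 = 0" by (subst sum_nonneg_eq_0_iff[symmetric]) auto
  thus "x = 0" by (simp add: vec_eq_iff)
qed simp

definition adj :: "complex ^'n^'n \<Rightarrow> complex^'n^'n" where
  "adj M = (\<chi> i j. cnj (M $ j $ i))"

lemma cinner_adj: "cinner x (M *v y) = cinner (adj M *v x) y"
  unfolding cinner_def adj_def matrix_vector_mult_def
  by (simp add: sum_distrib_left sum_distrib_right algebra_simps)
     (rule sum.swap)

section \<open>Orthonormal bases\<close>

definition colmat :: "('n \<Rightarrow> complex^'n) \<Rightarrow> complex^'n^'n" where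
  "colmat u = (\<chi> r j. u j $ r)"

lemma orthonormal_adj_mul:
  assumes "orthonormal_family u"
  shows "adj (colmat u) ** colmat u = mat 1"
  using assms unfolding orthonormal_family_def
  by (simp add: vec_eq_iff matrix_matrix_mult_def adj_def colmat_def mat_def cinner_def)

lemma orthonormal_mul_adj:
  assumes "orthonormal_family u"
  shows "colmat u ** adj (colmat u) = mat 1"
  using orthonormal_adj_mul[OF assms] matrix_left_right_inverse by blast

lemma orthonormal_expand:
  assumes "orthonormal_family u"
  shows "x = (\<Sum>j\<in>UNIV. cinner (u j) x *s u j)"
proof -
  have "x = (colmat u ** adj (colmat u)) *v x" by (simp add: orthonormal_mul_adj[OF assms])
  also have "\<dots> = colmat u *v (adj (colmat u) *v x)" by (simp add: matrix_vector_mul_assoc)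
  also have "\<dots> = (\<Sum>j\<in>UNIV. cinner (u j) x *s u j)"
    by (simp add: vec_eq_iff matrix_vector_mult_def adj_def colmat_def cinner_def sum_component
        mult.commute)
  finally show ?thesis .
qed

lemma parseval:
  assumes "orthonormal_family u"
  shows "cinner x y = (\<Sum>j\<in>UNIV. cnj (cinner (u j) x) * cinner (u j) y)"
proof -
  have "cinner x y = cinner x (\<Sum>j\<in>UNIV. cinner (u j) y *s u j)"
    using orthonormal_expand[OF assms, of y] by simp
  also have "\<dots> = (\<Sum>j\<in>UNIV. cnj (cinner (u j) x) * cinner (u j) y)"
    by (simp add: cinner_sum_right cinner_scale_right cinner_cnj mult.commute)
  finally show ?thesis .
qed

lemma parseval_norm:
  assumes "orthonormal_family u"
  shows "cinner x x = of_real (\<Sum>j\<in>UNIV. (cmod (cinner (u j) x))\<^sup>2)"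
  unfolding parseval[OF assms, of x x] of_real_sum
  by (intro sum.cong refl) (metis complex_norm_square of_real_power mult.commute)

section \<open>Hermitian matrices and eigensystems\<close>

definition hermitian :: "complex^'n^'n \<Rightarrow> bool" where
  "hermitian H \<longleftrightarrow> adj H = H"

definition eigsys :: "complex^'n^'n \<Rightarrow> ('n \<Rightarrow> complex^'n) \<Rightarrow> ('n \<Rightarrow> real) \<Rightarrow> bool" where
  "eigsys H u \<mu> \<longleftrightarrow> orthonormal_family u \<and> (\<forall>j. H *v u j = of_real (\<mu> j) *s u j)"

lemma mv_add: "(B::'a::comm_ring_1^'n^'m) *v (x + y) = B *v x + B *v y"
  by (simp add: vec_eq_iff matrix_vector_mult_def distrib_left sum.distrib)
lemma mv_diff: "(B::'a::comm_ring_1^'n^'m) *v (x - y) = B *v x - B *v y"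
  by (simp add: vec_eq_iff matrix_vector_mult_def right_diff_distrib sum_subtractf)
lemma mv_scale: "(B::'a::comm_ring_1^'n^'m) *v (c *s x) = c *s (B *v x)"
  by (simp add: vec_eq_iff matrix_vector_mult_def sum_distrib_left algebra_simps)
lemma mv_zero[simp]: "(B::'a::comm_ring_1^'n^'m) *v 0 = 0"
  by (simp add: vec_eq_iff matrix_vector_mult_def)
lemma mv_sum: "(B::'a::comm_ring_1^'n^'m) *v (sum f S) = (\<Sum>k\<in>S. B *v f k)"
  by (simp add: vec_eq_iff matrix_vector_mult_def sum_component sum_distrib_left) (intro allI sum.swap)

lemma eigsys_val:
  assumes "eigsys H u \<mu>"
  shows "cinner (u j) (H *v u j) = of_real (\<mu> j)"
  using assms unfolding eigsys_def orthonormal_family_def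
  by (simp add: cinner_scale_right)

lemma quad_form:
  assumes h: "hermitian H" and e: "eigsys H u \<mu>"
  shows "cinner x (H *v x) = of_real (\<Sum>j\<in>UNIV. \<mu> j * (cmod (cinner (u j) x))\<^sup>2)"
proof -
  have o: "orthonormal_family u" using e by (simp add: eigsys_def)
  have *: "cinner (u j) (H *v x) = of_real (\<mu> j) * cinner (u j) x" for j
  proof -
    have "cinner (u j) (H *v x) = cinner (H *v u j) x"
      using h by (simp add: cinner_adj hermitian_def)
    also have "\<dots> = of_real (\<mu> j) * cinner (u j) x"
      using e by (simp add: eigsys_def cinner_scale_left)
    finally show ?thesis .
  qed
  show ?thesis
    unfolding parseval[OF o, of x "H *v x"] * of_real_sum
    by (intro sum.cong refl)
       (simp add: of_real_mult complex_norm_square[symmetric] algebra_simps)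
qed

section \<open>Polynomials applied to matrices\<close>

definition pw :: "complex^'n^'n \<Rightarrow> nat \<Rightarrow> complex^'n \<Rightarrow> complex^'n" where
  "pw B k v = (((*v) B) ^^ k) v"

lemma pw_0[simp]: "pw B 0 v = v" by (simp add: pw_def)
lemma pw_Suc: "pw B (Suc k) v = B *v pw B k v" by (simp add: pw_def)
lemma pw_add: "pw B (m + k) v = pw B m (pw B k v)" by (simp add: pw_def funpow_add)
lemma pw_zero[simp]: "pw B k 0 = 0" by (induct k) (simp_all add: pw_Suc)

definition pv :: "complex poly \<Rightarrow> complex^'n^'n \<Rightarrow> complex^'n \<Rightarrow> complex^'n" where
  "pv p B v = (\<Sum>k\<le>degree p. coeff p k *s pw B k v)"

lemma scale_sum_vec: "(c::'a::comm_ring_1) *s sum f S = (\<Sum>k\<in>S. c *s f k)"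
  by (simp add: vec_eq_iff sum_component sum_distrib_left)

lemma pv_bound:
  assumes "degree p < N"
  shows "pv p B v = (\<Sum>k<N. coeff p k *s pw B k v)"
  unfolding pv_def
  by (rule sum.mono_neutral_left) (use assms in \<open>auto simp: coeff_eq_0\<close>)

lemma pv_pCons: "pv (pCons a p) B v = a *s v + B *v pv p B v"
proof -
  have d: "degree (pCons a p) < Suc (Suc (degree p))"
    by (cases "p = 0") auto
  have "pv (pCons a p) B v = (\<Sum>k<Suc (Suc (degree p)). coeff (pCons a p) k *s pw B k v)"
    by (rule pv_bound[OF d])
  also have "\<dots> = a *s v + (\<Sum>k<Suc (degree p). coeff p k *s pw B (Suc k) v)"
    by (subst sum.lessThan_Suc_shift) simp
  also have "(\<Sum>k<Suc (degree p). coeff p k *s pw B (Suc k) v) =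
     B *v (\<Sum>k<Suc (degree p). coeff p k *s pw B k v)"
    by (simp only: mv_sum mv_scale pw_Suc)
  also have "\<dots> = B *v pv p B v" using pv_bound[of p "Suc (degree p)" B v] by simp
  finally show ?thesis .
qed

lemma pv_0[simp]: "pv 0 B v = 0"
  by (simp add: pv_def)

lemma pv_add: "pv (p + q) B v = pv p B v + pv q B v"
proof -
  let ?N = "Suc (max (degree p) (degree q))"
  have "degree (p + q) \<le> max (degree p) (degree q)" by (rule degree_add_le_max)
  hence "degree (p + q) < ?N" by simp
  thus ?thesis
    by (simp add: pv_bound[of _ ?N] vector_sadd_rdistrib sum.distrib)
qed

lemma pv_smult: "pv (smult a p) B v = a *s pv p B v"
proof -
  have "degree (smult a p) < Suc (degree p)" using degree_smult_le[of a p] by simp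
  thus ?thesis
    by (simp add: pv_bound[of _ "Suc (degree p)"] scale_sum_vec vector_smult_assoc)
qed

lemma pv_mult: "pv (p * q) B v = pv p B (pv q B v)"
proof (induct p rule: pCons_induct)
  case 0
  then show ?case by simp
next
  case (pCons a p)
  show ?case
    by (simp add: mult_pCons_left pv_add pv_smult pv_pCons pCons)
qed

lemma pv_const: "pv [:a:] B v = a *s v"
  by (simp add: pv_pCons)

lemma pv_one[simp]: "pv 1 B v = v"
  by (simp add: pv_def)

lemma pv_x: "pv [:0, 1:] B v = B *v v"
  by (simp add: pv_pCons pv_const)

lemma pv_xpow: "pv ([:0, 1:] ^ m) B v = pw B m v"
proof (induct m)
  case 0
  then show ?case by (simp add: pv_const)
next
  case (Suc m)
  then show ?case by (simp add: pv_pCons pw_Suc)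
qed

lemma pv_sum: "pv (sum f S) B v = (\<Sum>k\<in>S. pv (f k) B v)"
  by (induct S rule: infinite_finite_induct) (simp_all add: pv_add)

lemma pv_monom: "pv (monom c k) B v = c *s pw B k v"
proof -
  have "degree (monom c k) < Suc k" using degree_monom_le[of c k] by simp
  hence "pv (monom c k) B v = (\<Sum>j<Suc k. coeff (monom c k) j *s pw B j v)"
    by (rule pv_bound)
  also have "\<dots> = (\<Sum>j<Suc k. if j = k then c *s pw B k v else 0)"
    by (intro sum.cong refl) (auto simp: coeff_monom)
  also have "\<dots> = c *s pw B k v" by (simp add: sum.delta)
  finally show ?thesis .
qed

lemma pw_in:
  assumes "\<forall>x\<in>V. B *v x \<in> V" "v \<in> V"
  shows "pw B k v \<in> V"
  by (induct k) (use assms in \<open>auto simp: pw_Suc\<close>)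

lemma pv_in:
  assumes "vec.subspace V" "\<forall>x\<in>V. B *v x \<in> V" "v \<in> V"
  shows "pv p B v \<in> V"
  unfolding pv_def
  by (intro vec.subspace_sum[OF assms(1)] vec.subspace_scale[OF assms(1)] pw_in[OF assms(2,3)])

lemma eigen_from_poly:
  assumes V: "vec.subspace V" "\<forall>x\<in>V. B *v x \<in> V"
  shows "p \<noteq> 0 \<Longrightarrow> u \<in> V \<Longrightarrow> u \<noteq> 0 \<Longrightarrow> pv p B u = 0 \<Longrightarrow>
    \<exists>w\<in>V. w \<noteq> 0 \<and> (\<exists>a. poly p a = 0 \<and> B *v w = a *s w)"
proof (induct "degree p" arbitrary: p rule: less_induct)
  case less
  show ?case
  proof (cases "degree p = 0")
    case True
    hence "pv p B u = coeff p 0 *s u" by (simp add: pv_def)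
    moreover have "coeff p 0 \<noteq> 0"
      using True less(2) leading_coeff_0_iff by fastforce
    ultimately show ?thesis using less(4,5) by (simp add: vector_mul_eq_0)
  next
    case False
    hence "\<not> constant (poly p)" by (simp add: constant_degree)
    then obtain a where a: "poly p a = 0" using fundamental_theorem_of_algebra by blast
    hence "[:- a, 1:] dvd p" using poly_eq_0_iff_dvd by blast
    then obtain q where pq: "p = [:- a, 1:] * q" by (elim dvdE)
    have q0: "q \<noteq> 0" using pq less(2) by auto
    have dq: "degree q < degree p"
      using pq q0 degree_mult_eq[of "[:- a, 1:]" q] by (simp del: mult_pCons_left)
    define w where "w = pv q B u"
    have wV: "w \<in> V" unfolding w_def by (rule pv_in[OF V less(3)])
    have "pv p B u = - a *s w + B *v w"
      unfolding pq pv_mult w_def[symmetric] by (simp add: pv_pCons pv_const)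
    hence eq: "B *v w = a *s w" using less(5)
      by (simp add: vec_eq_iff algebra_simps)
    show ?thesis
    proof (cases "w = 0")
      case True
      from less(1)[OF dq q0 less(3,4)] True obtain w' b where
        "w' \<in> V" "w' \<noteq> 0" "poly q b = 0" "B *v w' = b *s w'"
        unfolding w_def by blast
      thus ?thesis using pq by auto
    next
      case False
      thus ?thesis using wV eq a by blast
    qed
  qed
qed

lemma pv_diff: "pv (p - q) B v = pv p B v - pv q B v"
proof -
  have "p - q = p + smult (-1) q" by simp
  hence "pv (p - q) B v = pv p B v + (-1) *s pv q B v" by (simp only: pv_add pv_smult)
  thus ?thesis by (simp add: vec_eq_iff)
qed

lemma poly_exists:
  fixes B :: "complex^'n^'n"
  shows "\<exists>p. p \<noteq> 0 \<and> degree p \<le> CARD('n) \<and> pv p B v = 0"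
proof (cases "inj_on (\<lambda>k. pw B k v) {..CARD('n)}")
  case False
  then obtain i j where ij: "i \<le> CARD('n)" "j \<le> CARD('n)" "i \<noteq> j" "pw B i v = pw B j v"
    unfolding inj_on_def by auto
  define p where "p = monom (1::complex) i - monom 1 j"
  have "coeff p i = 1" using ij by (simp add: p_def coeff_monom)
  hence "p \<noteq> 0" by auto
  moreover have "degree p \<le> CARD('n)"
    by (rule degree_le) (use ij in \<open>auto simp: p_def coeff_monom\<close>)
  moreover have "pv p B v = 0" using ij by (simp add: p_def pv_diff pv_monom)
  ultimately show ?thesis by blast
next
  case True
  let ?f = "\<lambda>k. pw B k v"
  let ?S = "?f ` {..CARD('n)}"
  have cS: "card ?S = Suc CARD('n)" using True by (simp add: card_image)
  have "vec.dim ?S \<le> vec.dim (UNIV :: (complex^'n) set)" by (rule vec.dim_subset) simp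
  also have "\<dots> = CARD('n)" by (simp add: vec.dim_UNIV card_cart_basis)
  finally have "vec.dependent ?S"
    by (intro vec.dependent_biggerset_general) (simp add: cS)
  then obtain t c where t: "finite t" "t \<subseteq> ?S" "(\<Sum>x\<in>t. c x *s x) = 0" "\<exists>x\<in>t. c x \<noteq> 0"
    unfolding vec.dependent_explicit by blast
  define K where "K = {k \<in> {..CARD('n)}. ?f k \<in> t}"
  have tK: "t = ?f ` K" using t(2) unfolding K_def by auto
  have injK: "inj_on ?f K" using True unfolding K_def by (rule inj_on_subset) auto
  have finK: "finite K" unfolding K_def by simp
  define p where "p = (\<Sum>k\<in>K. monom (c (?f k)) k)"
  have cp: "coeff p k = (if k \<in> K then c (?f k) else 0)" for k
    by (simp add: p_def coeff_sum coeff_monom finK)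
  obtain x where x: "x \<in> t" "c x \<noteq> 0" using t(4) by blast
  then obtain k where "k \<in> K" "x = ?f k" using tK by auto
  hence "coeff p k \<noteq> 0" using x cp by simp
  hence "p \<noteq> 0" by auto
  moreover have "degree p \<le> CARD('n)"
    by (rule degree_le) (auto simp: cp K_def)
  moreover have "pv p B v = 0"
  proof -
    have "pv p B v = (\<Sum>k\<in>K. c (?f k) *s ?f k)" by (simp add: p_def pv_sum pv_monom)
    also have "\<dots> = (\<Sum>x\<in>t. c x *s x)" unfolding tK by (simp add: sum.reindex[OF injK])
    finally show ?thesis using t(3) by simp
  qed
  ultimately show ?thesis by blast
qed

lemma eigen_exists:
  fixes B :: "complex^'n^'n"
  assumes V: "vec.subspace V" "\<forall>x\<in>V. B *v x \<in> V" and u: "u \<in> V" "u \<noteq> 0"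
  shows "\<exists>w\<in>V. w \<noteq> 0 \<and> (\<exists>a. B *v w = a *s w)"
proof -
  obtain p where "p \<noteq> 0" "pv p B u = 0" using poly_exists by blast
  from eigen_from_poly[OF V this(1) u this(2)] show ?thesis by blast
qed

section \<open>Spectral theorem\<close>

lemma hermitian_cinner: "hermitian H \<Longrightarrow> cinner x (H *v y) = cinner (H *v x) y"
  by (simp add: cinner_adj hermitian_def)

lemma spectral_list:
  fixes H :: "complex^'n^'n"
  assumes h: "hermitian H"
  shows "k \<le> CARD('n) \<Longrightarrow> \<exists>ws. length ws = k \<and>
     (\<forall>i<k. \<forall>j<k. cinner (ws!i) (ws!j) = (if i = j then 1 else 0)) \<and>
     (\<forall>i<k. \<exists>a. H *v (ws!i) = a *s ws!i)"
proof (induct k)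
  case 0
  then show ?case by simp
next
  case (Suc k)
  then obtain ws where ws: "length ws = k"
     "\<forall>i<k. \<forall>j<k. cinner (ws!i) (ws!j) = (if i = j then 1 else 0)"
     "\<forall>i<k. \<exists>a. H *v (ws!i) = a *s ws!i" by auto
  have kn: "k < CARD('n)" using Suc(2) by simp
  define V where "V = {x. \<forall>i<k. cinner (ws!i) x = 0}"
  have sV: "vec.subspace V"
    unfolding vec.subspace_def V_def by (auto simp: cinner_add_right cinner_scale_right)
  have iV: "\<forall>x\<in>V. H *v x \<in> V"
  proof
    fix x assume x: "x \<in> V"
    show "H *v x \<in> V" unfolding V_def
    proof (intro CollectI allI impI)
      fix i assume i: "i < k"
      then obtain a where "H *v (ws!i) = a *s ws!i" using ws(3) by blast
      hence "cinner (ws!i) (H *v x) = cnj a * cinner (ws!i) x"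
        using hermitian_cinner[OF h] by (simp add: cinner_scale_left)
      thus "cinner (ws!i) (H *v x) = 0" using x i by (simp add: V_def)
    qed
  qed
  have "\<exists>u\<in>V. u \<noteq> 0"
  proof (rule ccontr)
    assume "\<not> (\<exists>u\<in>V. u \<noteq> 0)"
    hence V0: "\<forall>u\<in>V. u = 0" by blast
    have "x \<in> vec.span (set ws)" for x
    proof -
      let ?y = "x - (\<Sum>i<k. cinner (ws!i) x *s ws!i)"
      have "?y \<in> V" unfolding V_def
      proof (intro CollectI allI impI)
        fix l assume l: "l < k"
        have "cinner (ws!l) (\<Sum>i<k. cinner (ws!i) x *s ws!i) =
              (\<Sum>i<k. cinner (ws!i) x * (if l = i then 1 else 0))"
          using ws(2) l by (simp add: cinner_sum_right cinner_scale_right)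
        also have "\<dots> = (\<Sum>i<k. if i = l then cinner (ws!i) x else 0)"
          by (intro sum.cong) auto
        also have "\<dots> = cinner (ws!l) x" using l by (simp add: sum.delta')
        finally show "cinner (ws!l) ?y = 0" by (simp add: cinner_diff_right)
      qed
      hence "?y = 0" using V0 by blast
      hence "x = (\<Sum>i<k. cinner (ws!i) x *s ws!i)" by simp
      also have "\<dots> \<in> vec.span (set ws)"
        by (intro vec.span_sum vec.span_scale vec.span_base) (simp add: ws(1))
      finally show ?thesis .
    qed
    hence "(UNIV :: (complex^'n) set) \<subseteq> vec.span (set ws)" by blast
    hence "vec.dim (UNIV :: (complex^'n) set) \<le> card (set ws)" by (rule vec.dim_le_card) simp
    also have "\<dots> \<le> k" using card_length[of ws] ws(1) by simp
    finally show False using kn by (simp add: vec.dim_UNIV card_cart_basis)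
  qed
  then obtain u where u: "u \<in> V" "u \<noteq> 0" by blast
  from eigen_exists[OF sV iV u] obtain w a where w: "w \<in> V" "w \<noteq> 0" "H *v w = a *s w" by blast
  define s where "s = (\<Sum>i\<in>UNIV. (cmod (w $ i))\<^sup>2)"
  have ww: "cinner w w = of_real s" unfolding s_def by (rule cinner_self)
  have "s \<noteq> 0" using w(2) ww cinner_self_eq_0[of w] by auto
  moreover have "s \<ge> 0" unfolding s_def by (simp add: sum_nonneg)
  ultimately have spos: "s > 0" by simp
  define c where "c = complex_of_real (1 / sqrt s)"
  define w' where "w' = c *s w"
  have w'w': "cinner w' w' = 1"
  proof -
    have "cinner w' w' = cnj c * c * of_real s" unfolding w'_def
      by (simp add: cinner_scale_left cinner_scale_right ww)
    also have "\<dots> = of_real ((1 / sqrt s) * (1 / sqrt s) * s)"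
      unfolding c_def by (simp only: complex_cnj_complex_of_real of_real_mult)
    also have "(1 / sqrt s) * (1 / sqrt s) * s = 1" using spos
      by (simp add: field_simps)
    finally show ?thesis by simp
  qed
  have orth: "cinner (ws!i) w' = 0" if "i < k" for i
    using w(1) that by (simp add: w'_def cinner_scale_right V_def)
  have orth': "cinner w' (ws!i) = 0" if "i < k" for i
    using orth[OF that] cinner_cnj[of "ws!i" w'] by simp
  have eig': "H *v w' = a *s w'"
    by (simp add: w'_def mv_scale w(3) vector_smult_assoc mult.commute)
  let ?ws = "ws @ [w']"
  have nth: "?ws ! i = (if i < k then ws ! i else w')" if "i < Suc k" for i
    using that ws(1) by (auto simp: nth_append)
  show ?case
  proof (rule exI[of _ ?ws], intro conjI allI impI)
    show "length ?ws = Suc k" using ws(1) by simp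
  next
    fix i j assume "i < Suc k" "j < Suc k"
    thus "cinner (?ws!i) (?ws!j) = (if i = j then 1 else 0)"
      using ws(2) orth orth' w'w' by (auto simp: nth)
  next
    fix i assume i: "i < Suc k"
    thus "\<exists>a. H *v (?ws!i) = a *s ?ws!i"
      using ws(3) eig' by (cases "i < k") (auto simp: nth)
  qed
qed

lemma spectral:
  fixes H :: "complex^'n^'n"
  assumes h: "hermitian H"
  shows "\<exists>u \<mu>. eigsys H u \<mu>"
proof -
  obtain ws where ws: "length ws = CARD('n)"
     "\<forall>i<CARD('n). \<forall>j<CARD('n). cinner (ws!i) (ws!j) = (if i = j then 1 else 0)"
     "\<forall>i<CARD('n). \<exists>a. H *v (ws!i) = a *s ws!i"
    using spectral_list[OF h, of "CARD('n)"] by auto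
  obtain g where g: "bij_betw g (UNIV :: 'n set) {0..<CARD('n)}"
    using ex_bij_betw_finite_nat[of "UNIV :: 'n set"] by auto
  have gl: "g j < CARD('n)" for j using g by (auto simp: bij_betw_def)
  have gi: "g i = g j \<longleftrightarrow> i = j" for i j using g by (auto simp: bij_betw_def inj_on_def)
  define u where "u j = ws ! g j" for j
  have on: "orthonormal_family u"
    unfolding orthonormal_family_def u_def using ws(2) gl gi by simp
  have "\<forall>j. \<exists>r::real. H *v u j = of_real r *s u j"
  proof
    fix j
    obtain a where a: "H *v u j = a *s u j" using ws(3) gl unfolding u_def by blast
    have "cinner (u j) (H *v u j) = a"
      using on a by (simp add: cinner_scale_right orthonormal_family_def)
    moreover have "cinner (u j) (H *v u j) = cnj (cinner (u j) (H *v u j))"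
      using hermitian_cinner[OF h, of "u j" "u j"] cinner_cnj[of "u j" "H *v u j"] by simp
    ultimately have "a = cnj a" by simp
    hence "a = of_real (Re a)" by (simp add: complex_eq_iff)
    thus "\<exists>r::real. H *v u j = of_real r *s u j" using a by metis
  qed
  hence "\<exists>\<mu>. \<forall>j. H *v u j = of_real (\<mu> j) *s u j" by (rule choice)
  thus ?thesis using on unfolding eigsys_def by blast
qed

section \<open>The key majorization inequality\<close>

lemma ln_tangent:
  fixes a b :: real
  assumes "0 < a" "0 < b"
  shows "ln b \<le> ln a + (b - a) / a"
proof -
  have "ln (b / a) \<le> b / a - 1" using ln_le_minus_one[of "b / a"] assms by simp
  moreover have "ln (b / a) = ln b - ln a" using assms by (simp add: ln_div)
  moreover have "b / a - 1 = (b - a) / a" using assms by (simp add: field_simps)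
  ultimately show ?thesis by simp
qed

lemma log_majorize:
  fixes H1 H2 :: "complex^'n^'n"
  assumes e1: "eigsys H1 u \<mu>" and h2: "hermitian H2" and e2: "eigsys H2 v \<nu>"
    and hyp: "\<And>c. \<exists>x. orthonormal_family x \<and>
        (\<Sum>j\<in>UNIV. c j * Re (cinner (x j) (H2 *v x j))) = (\<Sum>j\<in>UNIV. c j * \<mu> j)"
    and t: "\<And>i. \<mu> i < t" "\<And>i. \<nu> i < t"
  shows "(\<Sum>i\<in>UNIV. ln (t - \<nu> i)) \<le> (\<Sum>i\<in>UNIV. ln (t - \<mu> i))"
proof -
  define c where "c j = 1 / (t - \<mu> j)" for j
  obtain x where ox: "orthonormal_family x" and
    xe: "(\<Sum>j\<in>UNIV. c j * Re (cinner (x j) (H2 *v x j))) = (\<Sum>j\<in>UNIV. c j * \<mu> j)"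
    using hyp by blast
  have ov: "orthonormal_family v" using e2 by (simp add: eigsys_def)
  define s where "s i j = (cmod (cinner (v i) (x j)))\<^sup>2" for i j
  define y where "y j = (\<Sum>i\<in>UNIV. \<nu> i * s i j)" for j
  have s0: "s i j \<ge> 0" for i j by (simp add: s_def)
  have ye: "Re (cinner (x j) (H2 *v x j)) = y j" for j
    unfolding quad_form[OF h2 e2] y_def s_def by simp
  have rows: "(\<Sum>i\<in>UNIV. s i j) = 1" for j
  proof -
    have "cinner (x j) (x j) = 1" using ox by (simp add: orthonormal_family_def)
    thus ?thesis using parseval_norm[OF ov, of "x j"] unfolding s_def by (metis of_real_eq_1_iff)
  qed
  have cols: "(\<Sum>j\<in>UNIV. s i j) = 1" for i
  proof -
    have "cinner (v i) (v i) = 1" using ov by (simp add: orthonormal_family_def)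
    hence "(\<Sum>j\<in>UNIV. (cmod (cinner (x j) (v i)))\<^sup>2) = 1"
      using parseval_norm[OF ox, of "v i"] by (metis of_real_eq_1_iff)
    moreover have "cmod (cinner (x j) (v i)) = cmod (cinner (v i) (x j))" for j
      by (metis cinner_cnj complex_mod_cnj)
    ultimately show ?thesis unfolding s_def by simp
  qed
  define M where "M = Max (range \<nu>)"
  have nuM: "\<nu> i \<le> M" for i unfolding M_def by simp
  have Mt: "M < t" unfolding M_def using t(2) by (simp add: Max_less_iff)
  have yt: "y j < t" for j
  proof -
    have "y j \<le> (\<Sum>i\<in>UNIV. M * s i j)" unfolding y_def
      by (intro sum_mono mult_right_mono nuM s0)
    also have "\<dots> = M" by (simp add: sum_distrib_left[symmetric] rows)
    finally show ?thesis using Mt by simp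
  qed
  have step1: "(\<Sum>i\<in>UNIV. s i j * ln (t - \<nu> i)) \<le> ln (t - y j)" for j
  proof -
    have "(\<Sum>i\<in>UNIV. s i j * ln (t - \<nu> i)) \<le>
          (\<Sum>i\<in>UNIV. s i j * (ln (t - y j) + ((t - \<nu> i) - (t - y j)) / (t - y j)))"
      by (intro sum_mono mult_left_mono ln_tangent s0) (use t yt in \<open>auto simp: algebra_simps\<close>)
    also have "\<dots> = (\<Sum>i\<in>UNIV. s i j) * ln (t - y j) +
                     ((\<Sum>i\<in>UNIV. s i j) * y j - (\<Sum>i\<in>UNIV. \<nu> i * s i j)) / (t - y j)"
      by (simp add: sum.distrib sum_distrib_left sum_distrib_right sum_subtractf sum_divide_distrib
          algebra_simps diff_divide_distrib add_divide_distrib)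
    also have "\<dots> = ln (t - y j)" by (simp add: rows y_def[symmetric])
    finally show ?thesis .
  qed
  have step2: "ln (t - y j) \<le> ln (t - \<mu> j) - c j * (y j - \<mu> j)" for j
  proof -
    have "ln (t - y j) \<le> ln (t - \<mu> j) + ((t - y j) - (t - \<mu> j)) / (t - \<mu> j)"
      by (rule ln_tangent) (use t yt in \<open>auto simp: algebra_simps\<close>)
    thus ?thesis by (simp add: c_def algebra_simps diff_divide_distrib)
  qed
  have "(\<Sum>i\<in>UNIV. ln (t - \<nu> i)) = (\<Sum>i\<in>UNIV. (\<Sum>j\<in>UNIV. s i j) * ln (t - \<nu> i))"
    by (simp add: cols)
  also have "\<dots> = (\<Sum>j\<in>UNIV. \<Sum>i\<in>UNIV. s i j * ln (t - \<nu> i))"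
    by (simp add: sum_distrib_right) (rule sum.swap)
  also have "\<dots> \<le> (\<Sum>j\<in>UNIV. ln (t - y j))" by (intro sum_mono step1)
  also have "\<dots> \<le> (\<Sum>j\<in>UNIV. ln (t - \<mu> j) - c j * (y j - \<mu> j))" by (intro sum_mono step2)
  also have "\<dots> = (\<Sum>j\<in>UNIV. ln (t - \<mu> j)) -
       ((\<Sum>j\<in>UNIV. c j * Re (cinner (x j) (H2 *v x j))) - (\<Sum>j\<in>UNIV. c j * \<mu> j))"
    by (simp add: ye sum_subtractf right_diff_distrib)
  also have "\<dots> = (\<Sum>j\<in>UNIV. ln (t - \<mu> j))" using xe by simp
  finally show ?thesis .
qed

section \<open>Rotated Hermitian parts\<close>

definition Hw :: "complex^'n^'n \<Rightarrow> complex \<Rightarrow> complex^'n^'n" where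
  "Hw A w = (\<chi> i j. (cnj w * A $ i $ j + w * cnj (A $ j $ i)) / 2)"

lemma hermitian_Hw: "hermitian (Hw A w)"
  unfolding hermitian_def adj_def Hw_def by (simp add: vec_eq_iff algebra_simps)

lemma adj_adj[simp]: "adj (adj M) = M"
  by (simp add: adj_def vec_eq_iff)

lemma Hw_mv: "Hw A w *v x = (cnj w / 2) *s (A *v x) + (w / 2) *s (adj A *v x)"
  by (simp add: vec_eq_iff Hw_def adj_def matrix_vector_mult_def sum_distrib_left
      sum.distrib[symmetric] add_divide_distrib algebra_simps)

lemma Hw_quad: "cinner x (Hw A w *v x) = of_real (Re (cnj w * cinner x (A *v x)))"
proof -
  have "cinner x (adj A *v x) = cnj (cinner x (A *v x))"
    by (simp add: cinner_adj cinner_cnj)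
  hence "cinner x (Hw A w *v x) = cnj w / 2 * cinner x (A *v x) + w / 2 * cnj (cinner x (A *v x))"
    by (simp add: Hw_mv cinner_add_right cinner_scale_right)
  also have "\<dots> = of_real (Re (cnj w * cinner x (A *v x)))"
    by (simp add: complex_eq_iff field_simps)
  finally show ?thesis .
qed

definition circ_hyp :: "complex^'n^'n \<Rightarrow> bool" where
  "circ_hyp A \<longleftrightarrow> (\<forall>c :: real ^ 'n. \<exists>r::real. r \<ge> 0 \<and> c_numerical_range c A = cball 0 r)"

lemma transfer:
  fixes A :: "complex^'n^'n" and c :: "'n \<Rightarrow> real"
  assumes P: "circ_hyp A" and w1: "cmod w1 = 1" and w2: "cmod w2 = 1"
    and e1: "eigsys (Hw A w1) u \<mu>"
  shows "\<exists>x. orthonormal_family x \<and>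
        (\<Sum>j\<in>UNIV. c j * Re (cinner (x j) (Hw A w2 *v x j))) = (\<Sum>j\<in>UNIV. c j * \<mu> j)"
proof -
  define cv :: "real^'n" where "cv = (\<chi> j. c j)"
  obtain r where r: "c_numerical_range cv A = cball 0 r" using P unfolding circ_hyp_def by blast
  have ou: "orthonormal_family u" using e1 by (simp add: eigsys_def)
  define z where "z = (\<Sum>j\<in>UNIV. complex_of_real (cv $ j) * cinner (u j) (A *v u j))"
  have "z \<in> c_numerical_range cv A" unfolding z_def c_numerical_range_def using ou by blast
  hence "norm z \<le> r" using r by simp
  define z' where "z' = w2 * cnj w1 * z"
  have "norm z' = norm z" using w1 w2 by (simp add: z'_def norm_mult)
  hence "z' \<in> c_numerical_range cv A" using r \<open>norm z \<le> r\<close> by simp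
  then obtain x where ox: "orthonormal_family x" and
    xz: "z' = (\<Sum>j\<in>UNIV. complex_of_real (cv $ j) * cinner (x j) (A *v x j))"
    unfolding c_numerical_range_def by blast
  have w2w2: "cnj w2 * w2 = 1"
    using w2 complex_norm_square[of w2] by (simp add: mult.commute)
  have "(\<Sum>j\<in>UNIV. c j * Re (cinner (x j) (Hw A w2 *v x j))) =
        Re (cnj w2 * z')"
    by (simp add: Hw_quad xz sum_distrib_left Re_sum cv_def algebra_simps)
  also have "cnj w2 * z' = cnj w1 * z" unfolding z'_def
    by (simp add: mult.assoc[symmetric] w2w2)
  also have "Re (cnj w1 * z) = (\<Sum>j\<in>UNIV. c j * Re (cinner (u j) (Hw A w1 *v u j)))"
    by (simp add: Hw_quad z_def sum_distrib_left Re_sum cv_def algebra_simps)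
  also have "\<dots> = (\<Sum>j\<in>UNIV. c j * \<mu> j)"
    using eigsys_val[OF e1] by simp
  finally show ?thesis using ox by blast
qed

lemma charpoly_eq:
  fixes A :: "complex^'n^'n" and z :: complex
  assumes P: "circ_hyp A" and w1: "cmod w1 = 1" and w2: "cmod w2 = 1"
    and e1: "eigsys (Hw A w1) u \<mu>" and e2: "eigsys (Hw A w2) v \<nu>"
  shows "(\<Prod>i\<in>UNIV. z - of_real (\<mu> i)) = (\<Prod>i\<in>UNIV. z - of_real (\<nu> i))"
proof -
  define T where "T = max (Max (range \<mu>)) (Max (range \<nu>))"
  have real_eq: "(\<Prod>i\<in>UNIV. t - \<mu> i) = (\<Prod>i\<in>UNIV. t - \<nu> i)" if tT: "T < t" for t
  proof -
    have mt: "\<mu> i < t" for i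
    proof -
      have "\<mu> i \<le> Max (range \<mu>)" by simp
      thus ?thesis using tT unfolding T_def by simp
    qed
    have nt: "\<nu> i < t" for i
    proof -
      have "\<nu> i \<le> Max (range \<nu>)" by simp
      thus ?thesis using tT unfolding T_def by simp
    qed
    have le1: "(\<Sum>i\<in>UNIV. ln (t - \<nu> i)) \<le> (\<Sum>i\<in>UNIV. ln (t - \<mu> i))"
      by (rule log_majorize[OF e1 hermitian_Hw e2 transfer[OF P w1 w2 e1] mt nt])
    have le2: "(\<Sum>i\<in>UNIV. ln (t - \<mu> i)) \<le> (\<Sum>i\<in>UNIV. ln (t - \<nu> i))"
      by (rule log_majorize[OF e2 hermitian_Hw e1 transfer[OF P w2 w1 e2] nt mt])
    have "exp (\<Sum>i\<in>UNIV. ln (t - \<mu> i)) = exp (\<Sum>i\<in>UNIV. ln (t - \<nu> i))"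
      using le1 le2 by simp
    thus ?thesis using mt nt by (simp add: exp_sum)
  qed
  define p1 where "p1 = (\<Prod>i\<in>UNIV. [:- of_real (\<mu> i), 1:] :: complex poly)"
  define p2 where "p2 = (\<Prod>i\<in>UNIV. [:- of_real (\<nu> i), 1:] :: complex poly)"
  have ev1: "poly p1 z = (\<Prod>i\<in>UNIV. z - of_real (\<mu> i))" for z by (simp add: p1_def poly_prod)
  have ev2: "poly p2 z = (\<Prod>i\<in>UNIV. z - of_real (\<nu> i))" for z by (simp add: p2_def poly_prod)
  have "p1 - p2 = 0"
  proof (rule ccontr)
    assume ne: "p1 - p2 \<noteq> 0"
    have "of_real ` {T<..} \<subseteq> {x. poly (p1 - p2) x = 0}"
    proof
      fix x assume "x \<in> (of_real ` {T<..} :: complex set)"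
      then obtain t where t: "T < t" "x = of_real t" by auto
      have "poly p1 x = of_real (\<Prod>i\<in>UNIV. t - \<mu> i)" using t by (simp add: ev1)
      also have "\<dots> = of_real (\<Prod>i\<in>UNIV. t - \<nu> i)" using real_eq[OF t(1)] by simp
      also have "\<dots> = poly p2 x" using t by (simp add: ev2)
      finally show "x \<in> {x. poly (p1 - p2) x = 0}" by simp
    qed
    moreover have "infinite (of_real ` {T<..} :: complex set)"
      using infinite_Ioi[of T] finite_imageD[of "of_real :: real \<Rightarrow> complex" "{T<..}"]
      by (auto simp: inj_on_def)
    ultimately show False using poly_roots_finite[OF ne] finite_subset by blast
  qed
  hence "p1 = p2" by simp
  thus ?thesis using ev1[of z] ev2[of z] by simp
qed

lemma det_eigsys:
  fixes H :: "complex^'n^'n"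
  assumes e: "eigsys H u \<mu>"
  shows "det (mat z - H) = (\<Prod>i\<in>UNIV. z - of_real (\<mu> i))"
proof -
  have ou: "orthonormal_family u" using e by (simp add: eigsys_def)
  let ?U = "colmat u"
  have c1: "((mat z - H) ** ?U) $ r $ j = (z - of_real (\<mu> j)) * u j $ r" for r j
  proof -
    have "((mat z - H) ** ?U) $ r $ j = (\<Sum>k\<in>UNIV. (if r = k then z else 0) * u j $ k)
          - (H *v u j) $ r"
      by (simp add: matrix_matrix_mult_def colmat_def mat_def matrix_vector_mult_def
          left_diff_distrib sum_subtractf)
    also have "\<dots> = (z - of_real (\<mu> j)) * u j $ r"
    proof -
      have "(\<Sum>k\<in>UNIV. (if r = k then z else 0) * u j $ k) = (\<Sum>k\<in>UNIV. if r = k then z * u j $ k else 0)"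
        by (intro sum.cong) auto
      also have "\<dots> = z * u j $ r" by simp
      finally show ?thesis using e by (simp add: eigsys_def left_diff_distrib)
    qed
    finally show ?thesis .
  qed
  have c2: "(adj ?U ** ((mat z - H) ** ?U)) $ i $ j = (if i = j then z - of_real (\<mu> j) else 0)"
    for i j
  proof -
    have gen: "(adj ?U ** X) $ i $ j = (\<Sum>r\<in>UNIV. cnj (u i $ r) * X $ r $ j)" for X
      by (simp add: matrix_matrix_mult_def adj_def colmat_def)
    have "(adj ?U ** ((mat z - H) ** ?U)) $ i $ j =
          (z - of_real (\<mu> j)) * cinner (u i) (u j)"
      unfolding gen c1 by (simp add: cinner_def sum_distrib_left algebra_simps)
    thus ?thesis using ou by (simp add: orthonormal_family_def)
  qed
  have "det (adj ?U ** ((mat z - H) ** ?U)) = det (mat z - H) * det (adj ?U ** ?U)"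
    by (simp add: det_mul)
  also have "det (adj ?U ** ?U) = 1" by (simp add: orthonormal_adj_mul[OF ou])
  finally have "det (mat z - H) = det (adj ?U ** ((mat z - H) ** ?U))" by simp
  also have "\<dots> = (\<Prod>i\<in>UNIV. z - of_real (\<mu> i))"
    by (subst det_diagonal) (simp_all add: c2)
  finally show ?thesis .
qed

section \<open>Polynomial identity argument\<close>

lemma det_poly_eval:
  fixes M :: "complex poly^'n^'n"
  shows "poly (det M) w = det (\<chi> i j. poly (M $ i $ j) w)"
  unfolding det_def by (simp add: poly_sum poly_prod)

lemma circle_infinite: "infinite {w::complex. cmod w = 1}"
proof
  assume fin: "finite {w::complex. cmod w = 1}"
  define f where "f x = Complex x (sqrt (1 - x\<^sup>2))" for x
  have "f ` {-1<..<1} \<subseteq> {w. cmod w = 1}"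
  proof
    fix w assume "w \<in> f ` {-1<..<1}"
    then obtain x where x: "x \<in> {-1<..<1}" "w = f x" by auto
    have "x\<^sup>2 \<le> 1" using x(1) by (auto simp: abs_square_le_1)
    thus "w \<in> {w. cmod w = 1}" using x(2) by (simp add: f_def cmod_def)
  qed
  hence "finite (f ` {-1<..<1})" using fin finite_subset by blast
  moreover have "inj_on f {-1<..<1}" by (auto simp: inj_on_def f_def)
  ultimately have "finite {-1<..<(1::real)}" using finite_imageD by blast
  thus False using infinite_Ioo[of "-1" "1::real"] by simp
qed

lemma det_shift:
  fixes A :: "complex^'n^'n"
  assumes P: "circ_hyp A"
  shows "det (\<chi> i j. (if i = j then s else 0) - A $ i $ j / 2) = s ^ CARD('n)"
proof -
  obtain u \<mu> where e1: "eigsys (Hw A 1) u \<mu>" using spectral[OF hermitian_Hw] by blast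
  define PM :: "complex poly^'n^'n" where
    "PM = (\<chi> i j. [: (if i = j then s else 0) - A $ i $ j / 2, 0, - cnj (A $ j $ i) / 2 :])"
  define Q where "Q = (\<Prod>i\<in>UNIV. [: s, - of_real (\<mu> i) :])"
  have evQ: "poly Q w = (\<Prod>i\<in>UNIV. s - w * of_real (\<mu> i))" for w
    by (simp add: Q_def poly_prod)
  have evPM: "poly (det PM) w = det (\<chi> i j. (if i = j then s else 0) - A $ i $ j / 2
                - w\<^sup>2 * cnj (A $ j $ i) / 2)" for w
    unfolding det_poly_eval PM_def by (simp add: power2_eq_square algebra_simps)
  have circ: "poly (det PM) w = poly Q w" if w: "cmod w = 1" for w
  proof -
    have ww: "w * cnj w = 1" using w complex_norm_square[of w] by simp
    obtain v \<nu> where e2: "eigsys (Hw A w) v \<nu>" using spectral[OF hermitian_Hw] by blast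
    have mat_eq: "(\<chi> i j. (if i = j then s else 0) - A $ i $ j / 2 - w\<^sup>2 * cnj (A $ j $ i) / 2)
        = mat w ** (mat (s * cnj w) - Hw A w)"
    proof -
      have "(mat w ** X) $ i $ j = w * X $ i $ j" for X :: "complex^'n^'n" and i j
      proof -
        have "(mat w ** X) $ i $ j = (\<Sum>k\<in>UNIV. (if i = k then w else 0) * X $ k $ j)"
          by (simp add: matrix_matrix_mult_def mat_def)
        also have "\<dots> = (\<Sum>k\<in>UNIV. if i = k then w * X $ k $ j else 0)"
          by (intro sum.cong) auto
        also have "\<dots> = w * X $ i $ j" by simp
        finally show ?thesis .
      qed
      moreover have "w * (mat (s * cnj w) - Hw A w) $ i $ j =
          (if i = j then s else 0) - A $ i $ j / 2 - w\<^sup>2 * cnj (A $ j $ i) / 2" for i j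
      proof -
        have "w * (mat (s * cnj w) - Hw A w) $ i $ j =
           (if i = j then s * (w * cnj w) else 0) - ((w * cnj w) * A $ i $ j + w\<^sup>2 * cnj (A $ j $ i)) / 2"
          by (simp add: mat_def Hw_def power2_eq_square algebra_simps)
        thus ?thesis by (simp add: ww diff_divide_distrib add_divide_distrib)
      qed
      ultimately show ?thesis by (simp add: vec_eq_iff)
    qed
    have dw: "det (mat w :: complex^'n^'n) = w ^ CARD('n)"
      by (subst det_diagonal) (simp_all add: mat_def)
    have "poly (det PM) w = w ^ CARD('n) * det (mat (s * cnj w) - Hw A w)"
      unfolding evPM mat_eq det_mul dw ..
    also have "det (mat (s * cnj w) - Hw A w) = (\<Prod>i\<in>UNIV. s * cnj w - of_real (\<nu> i))"
      by (rule det_eigsys[OF e2])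
    also have "\<dots> = (\<Prod>i\<in>UNIV. s * cnj w - of_real (\<mu> i))"
      by (rule charpoly_eq[OF P _ _ e2 e1]) (simp_all add: w)
    also have "w ^ CARD('n) * \<dots> = (\<Prod>i\<in>UNIV. w * (s * cnj w - of_real (\<mu> i)))"
      by (simp add: prod.distrib)
    also have "\<dots> = (\<Prod>i\<in>UNIV. s - w * of_real (\<mu> i))"
    proof (intro prod.cong refl)
      fix i
      have "w * (s * cnj w - of_real (\<mu> i)) = s * (w * cnj w) - w * of_real (\<mu> i)"
        by (simp add: algebra_simps)
      thus "w * (s * cnj w - of_real (\<mu> i)) = s - w * of_real (\<mu> i)" by (simp add: ww)
    qed
    finally show ?thesis by (simp add: evQ)
  qed
  have "det PM - Q = 0"
  proof (rule ccontr)
    assume ne: "det PM - Q \<noteq> 0"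
    have "{w::complex. cmod w = 1} \<subseteq> {x. poly (det PM - Q) x = 0}" using circ by auto
    thus False using poly_roots_finite[OF ne] circle_infinite finite_subset by blast
  qed
  hence "poly (det PM) 0 = poly Q 0" by simp
  thus ?thesis using evPM[of 0] evQ[of 0] by simp
qed

section \<open>Nilpotency\<close>

lemma det_nonzero:
  fixes A :: "complex^'n^'n"
  assumes P: "circ_hyp A" and a: "a \<noteq> 0"
  shows "det (mat a - A) \<noteq> 0"
proof -
  have eq: "mat a - A = mat 2 ** (\<chi> i j. (if i = j then a / 2 else 0) - A $ i $ j / 2)"
  proof -
    have "(mat 2 ** X) $ i $ j = 2 * X $ i $ j" for X :: "complex^'n^'n" and i j
    proof -
      have "(mat 2 ** X) $ i $ j = (\<Sum>k\<in>UNIV. (if i = k then 2 else 0) * X $ k $ j)"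
        by (simp add: matrix_matrix_mult_def mat_def)
      also have "\<dots> = (\<Sum>k\<in>UNIV. if i = k then 2 * X $ k $ j else 0)"
        by (intro sum.cong) auto
      also have "\<dots> = 2 * X $ i $ j" by simp
      finally show ?thesis .
    qed
    thus ?thesis by (simp add: vec_eq_iff mat_def)
  qed
  have d2: "det (mat 2 :: complex^'n^'n) = 2 ^ CARD('n)"
    by (subst det_diagonal) (simp_all add: mat_def)
  have "det (mat a - A) = 2 ^ CARD('n) * (a / 2) ^ CARD('n)"
    unfolding eq det_mul d2 det_shift[OF P] ..
  thus ?thesis using a by simp
qed

lemma no_nonzero_eig:
  fixes A :: "complex^'n^'n"
  assumes P: "circ_hyp A" and a: "a \<noteq> 0" and x: "A *v x = a *s x"
  shows "x = 0"
proof -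
  have "invertible (mat a - A)" using det_nonzero[OF P a] by (simp add: invertible_det_nz)
  then obtain B where B: "B ** (mat a - A) = mat 1" unfolding invertible_def by blast
  have "(mat a - A) *v x = a *s x - A *v x"
  proof -
    have "(mat a *v x) $ i = a * x $ i" for i
    proof -
      have "(mat a *v x) $ i = (\<Sum>k\<in>UNIV. (if i = k then a else 0) * x $ k)"
        by (simp add: matrix_vector_mult_def mat_def)
      also have "\<dots> = (\<Sum>k\<in>UNIV. if i = k then a * x $ k else 0)"
        by (intro sum.cong) auto
      also have "\<dots> = a * x $ i" by simp
      finally show ?thesis .
    qed
    thus ?thesis by (simp add: vec_eq_iff matrix_vector_mult_def left_diff_distrib sum_subtractf)
  qed
  hence "(mat a - A) *v x = 0" using x by simp
  hence "B *v ((mat a - A) *v x) = 0" by simp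
  thus ?thesis by (simp add: matrix_vector_mul_assoc B matrix_vector_mul_lid)
qed

lemma matrix_power_mv: "matrix_power A k *v v = pw A k v"
  by (induct k) (simp_all add: matrix_power_def pw_Suc matrix_vector_mul_assoc[symmetric]
      matrix_vector_mul_lid)

lemma kill_vector:
  fixes A :: "complex^'n^'n"
  assumes P: "circ_hyp A"
  shows "pw A (CARD('n)) v = 0"
proof -
  obtain p where p: "p \<noteq> 0" "degree p \<le> CARD('n)" "pv p A v = 0" using poly_exists by blast
  obtain q where q: "p = [:- 0, 1:] ^ order 0 p * q" "\<not> [:- 0, 1:] dvd q"
    using order_decomp[OF p(1)] by blast
  define m where "m = order 0 p"
  have mle: "m \<le> CARD('n)" using order_degree[OF p(1), of 0] p(2) unfolding m_def by simp
  have q0: "q \<noteq> 0" using q(1) p(1) by auto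
  have pq0: "poly q 0 \<noteq> 0" using q(2) poly_eq_0_iff_dvd[of q 0] by simp
  have "pv q A (pw A m v) = 0"
  proof -
    have "p = q * [:0, 1:] ^ m" using q(1) unfolding m_def by (simp add: mult.commute)
    hence "pv p A v = pv q A (pw A m v)" by (simp add: pv_mult pv_xpow)
    thus ?thesis using p(3) by simp
  qed
  have "pw A m v = 0"
  proof (rule ccontr)
    assume ne: "pw A m v \<noteq> 0"
    have "\<exists>w\<in>UNIV. w \<noteq> 0 \<and> (\<exists>a. poly q a = 0 \<and> A *v w = a *s w)"
      by (rule eigen_from_poly[OF vec.subspace_UNIV _ q0 _ ne \<open>pv q A (pw A m v) = 0\<close>]) simp_all
    then obtain w b where w: "w \<noteq> 0" "poly q b = 0" "A *v w = b *s w" by blast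
    have "b \<noteq> 0" using w(2) pq0 by auto
    thus False using no_nonzero_eig[OF P _ w(3)] w(1) by simp
  qed
  hence "pw A (CARD('n) - m + m) v = 0" by (simp only: pw_add pw_zero)
  thus ?thesis using mle by simp
qed

theorem mainTheorem17:
  fixes A :: "complex ^ 'n ^ 'n"
  assumes "\<forall>c :: real ^ 'n. \<exists>r::real. r \<ge> 0 \<and> c_numerical_range c A = cball 0 r"
  shows "nilpotent_matrix A"
proof -
  have P: "circ_hyp A" using assms by (simp add: circ_hyp_def)
  have "matrix_power A (CARD('n)) = 0"
    unfolding matrix_eq matrix_power_mv kill_vector[OF P]
    by (simp add: vec_eq_iff matrix_vector_mult_def)
  thus ?thesis unfolding nilpotent_matrix_def by blast
qed

end
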